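(* Let $n$ be a perfect square divisible by $5^4$. Then $C_{S(n)^*}\le 7$.
   Context: For a natural number $n$, $\mathbb Z_n=\mathbb Z/n\mathbb Z$, $S(n)=\{x^2:x\in\mathbb Z_n\}$, $S(n)^*=S(n)\setminus\{0\}$. For $A\subseteq\mathbb Z_n$, a sequence $(y_1,\dots,y_t)$ ($t\ge1$) in $\mathbb Z_n$ is an $A$-weighted zero-sum sequence if there exist $a_1,\dots,a_t\in A$ with $\sum a_iy_i=0$. $C_A(n)$ is the least positive integer $t$ such that every sequence of length $t$ in $\mathbb Z_n$ has a nonempty subsequence of consecutive terms that is an $A$-weighted zero-sum sequence; $C_{S(n)^*}=C_{S(n)^*}(n)$. *)

theory Defs
  imports Main
begin

text \<open>Z_n is modelled by the residues {0..<n} (n > 0) with arithmetic mod n.\<close>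

definition Zmod :: "nat \<Rightarrow> nat set" where
  "Zmod n = {0..<n}"

definition sq_set :: "nat \<Rightarrow> nat set" where
  "sq_set n = {(x * x) mod n | x. x < n}"

definition sq_set_star :: "nat \<Rightarrow> nat set" where
  "sq_set_star n = sq_set n - {0}"

definition weighted_zero_sum :: "nat \<Rightarrow> nat set \<Rightarrow> (nat \<Rightarrow> nat) \<Rightarrow> nat set \<Rightarrow> bool" where
  "weighted_zero_sum n A y I \<longleftrightarrow>
     (\<exists>a. (\<forall>i\<in>I. a i \<in> A) \<and> (\<Sum>i\<in>I. a i * y i) mod n = 0)"

definition C_property :: "nat \<Rightarrow> nat set \<Rightarrow> nat \<Rightarrow> bool" where
  "C_property n A t \<longleftrightarrow>
     (\<forall>y. (\<forall>i<t. y i \<in> Zmod n) \<longrightarrow>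
        (\<exists>i j. i < j \<and> j \<le> t \<and> weighted_zero_sum n A y {i..<j}))"

definition C_const :: "nat set \<Rightarrow> nat \<Rightarrow> nat" where
  "C_const A n = (LEAST t. 0 < t \<and> C_property n A t)"

end

theory Submission
  imports Defs "HOL-Number_Theory.Number_Theory"
begin

lemma pow5:
  fixes x :: int
  assumes "k \<ge> 1" "(5::int)^k dvd x - 1"
  shows "(5::int)^(k+1) dvd x^5 - 1"
proof -
  have e: "x^5 - 1 = (x - 1) * (x^4 + x^3 + x^2 + x + 1)" by (simp add: eval_nat_numeral algebra_simps)
  have "(5::int) dvd 5^k" using assms(1) by (simp add: dvd_power)
  hence "(5::int) dvd x - 1" using assms(2) dvd_trans by blast
  hence c: "[x = 1] (mod 5)" by (simp add: cong_iff_dvd_diff)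
  have "[x^4 + x^3 + x^2 + x + 1 = 1^4 + 1^3 + 1^2 + 1 + 1] (mod 5)"
    by (intro cong_add cong_pow c cong_refl)
  hence f: "(5::int) dvd x^4 + x^3 + x^2 + x + 1"
    by (simp add: cong_0_iff[symmetric] cong_def)
  have "(5::int)^k * 5 dvd (x - 1) * (x^4 + x^3 + x^2 + x + 1)"
    using mult_dvd_mono[OF assms(2) f] .
  moreover have "(5::int)^(k+1) = 5^k*5" by simp
  ultimately show ?thesis using e by metis
qed

lemma p125:
  fixes x :: int
  assumes "[x = 1] (mod 5)"
  shows "[x^125 = 1] (mod 625)"
proof -
  have "(5::int)^1 dvd x - 1" using assms by (simp add: cong_iff_dvd_diff)
  hence "(5::int)^2 dvd x^5 - 1" using pow5[of 1 x] by simp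
  hence "(5::int)^3 dvd (x^5)^5 - 1" using pow5[of 2 "x^5"] by simp
  hence "(5::int)^4 dvd ((x^5)^5)^5 - 1" using pow5[of 3 "(x^5)^5"] by simp
  moreover have "((x^5)^5)^5 = x^125" by (simp add: power_mult[symmetric])
  ultimately show ?thesis by (simp add: cong_iff_dvd_diff)
qed

lemma sqrt1:
  fixes q :: int
  assumes "[q = 1] (mod 5)"
  shows "\<exists>u. [u^2 = q] (mod 625)"
proof
  have "(q^63)^2 = q^(1+125)" by (simp add: power_mult[symmetric])
  also have "\<dots> = q * q^125" by (simp only: power_add power_one_right)
  finally have "(q^63)^2 = q * q^125" .
  moreover have "[q * q^125 = q * 1] (mod 625)" using p125[OF assms] by (intro cong_mult cong_refl)
  ultimately show "[(q^63)^2 = q] (mod 625)" by simp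
qed

lemma sqrt_any:
  fixes q :: int
  assumes "[q = 1] (mod 5) \<or> [q = -1] (mod 5)"
  shows "\<exists>u. [u^2 = q] (mod 625)"
  using assms
proof
  assume "[q = 1] (mod 5)" thus ?thesis by (rule sqrt1)
next
  assume "[q = -1] (mod 5)"
  hence "[-q = 1] (mod 5)" by (metis cong_minus_minus_iff minus_minus)
  then obtain s where s: "[s^2 = -q] (mod 625)" using sqrt1 by blast
  have r: "[(182::int)^2 = -1] (mod 625)" by (simp add: cong_def)
  have "[(182*s)^2 = (-1) * (-q)] (mod 625)" unfolding power_mult_distrib
    by (intro cong_mult r s)
  hence "[(182*s)^2 = q] (mod 625)" by (metis mult_minus1 minus_minus)
  thus ?thesis by blast
qed

lemma L1:
  fixes A B Z :: int
  assumes nb: "\<not> 5 dvd B" and ab: "5 dvd A^2 - B^2"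
  shows "\<exists>u. (625::int) dvd A + u^2*B + 5*Z \<and> \<not> (625::int) dvd u^2"
proof -
  have p5: "prime (5::int)" by simp
  have "coprime B 5" using nb p5 by (metis coprime_commute prime_imp_coprime)
  hence "coprime B 625" using coprime_power_right_iff[of B "5::int" 4] by simp
  then obtain b where b: "[B * b = 1] (mod 625)" using cong_solve_coprime_int by blast
  define q where "q = -(A + 5*Z) * b"
  have qB: "[B * q = -(A + 5*Z)] (mod 625)"
  proof -
    have "B * q = -(A + 5*Z) * (B * b)" by (simp add: q_def algebra_simps)
    moreover have "[-(A + 5*Z) * (B * b) = -(A + 5*Z) * 1] (mod 625)" by (intro cong_mult cong_refl b)
    ultimately show ?thesis by (metis mult_1_right)
  qed
  hence "[B * q = -(A + 5*Z)] (mod 5)" by (rule cong_dvd_modulus) simp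
  hence "[(B*q)^2 = (-(A + 5*Z))^2] (mod 5)" by (rule cong_pow)
  moreover have "(-(A + 5*Z))^2 = A^2 + 5*(2*A*Z + 5*Z^2)" by (simp add: power2_eq_square algebra_simps)
  moreover have "[A^2 + 5*(2*A*Z + 5*Z^2) = A^2] (mod 5)" by (simp only: cong_iff_dvd_diff add_diff_cancel_left' dvd_triv_left)
  ultimately have "[(B*q)^2 = A^2] (mod 5)"
    using cong_trans by metis
  moreover have "[A^2 = B^2] (mod 5)" using ab by (simp add: cong_iff_dvd_diff)
  ultimately have "[(B*q)^2 = B^2] (mod 5)" using cong_trans by blast
  hence "5 dvd B^2 * (q^2 - 1)" by (simp add: cong_iff_dvd_diff algebra_simps power_mult_distrib)
  moreover have "\<not> 5 dvd B^2" using nb p5 prime_dvd_power by blast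
  ultimately have "5 dvd q^2 - 1" using p5 prime_dvd_mult_iff by blast
  hence "5 dvd (q - 1) * (q + 1)" by (simp add: algebra_simps power2_eq_square)
  hence "5 dvd q - 1 \<or> 5 dvd q + 1" using p5 prime_dvd_mult_iff by blast
  hence "[q = 1] (mod 5) \<or> [q = -1] (mod 5)" by (auto simp: cong_iff_dvd_diff)
  then obtain u where u: "[u^2 = q] (mod 625)" using sqrt_any by blast
  have "[A + u^2*B + 5*Z = A + q*B + 5*Z] (mod 625)" by (intro cong_add cong_mult u cong_refl)
  moreover have "[A + q*B + 5*Z = A + (-(A+5*Z)) + 5*Z] (mod 625)"
    using qB by (intro cong_add cong_refl) (simp add: mult.commute)
  ultimately have c0: "[A + u^2*B + 5*Z = A + (-(A+5*Z)) + 5*Z] (mod 625)" by (rule cong_trans)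
  have "A + (-(A+5*Z)) + 5*Z = 0" by simp
  hence c: "[A + u^2*B + 5*Z = 0] (mod 625)" using c0 by simp
  have "\<not> (625::int) dvd u^2"
  proof
    assume "(625::int) dvd u^2"
    hence "(625::int) dvd u^2 * B" by simp
    moreover have "(625::int) dvd A + u^2*B + 5*Z" using c by (simp add: cong_0_iff)
    ultimately have "(625::int) dvd (A + u^2*B + 5*Z) - u^2*B" by (rule dvd_diff[rotated])
    hence "(625::int) dvd A + 5*Z" by (simp add: algebra_simps)
    hence "(5::int) dvd A + 5*Z" by (rule dvd_trans[rotated]) simp
    hence "(5::int) dvd A" by (simp add: dvd_add_left_iff)
    hence "(5::int) dvd A^2" by (simp add: power2_eq_square)
    hence "(5::int) dvd A^2 - (A^2 - B^2)" using ab by (rule dvd_diff)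
    hence "(5::int) dvd B^2" by simp
    thus False using \<open>\<not> 5 dvd B^2\<close> by simp
  qed
  thus ?thesis using c by (auto simp: cong_0_iff)
qed

lemma sq_mem:
  fixes n d r :: nat
  assumes n: "n = 625*d^2" and d: "0<d" and r: "\<not> 625 dvd r^2"
  shows "(d^2*r^2) mod n \<in> sq_set_star n"
proof -
  have npos: "0 < n" using n d by simp
  have "d^2*r^2 = (d*r)*(d*r)" by (simp add: power2_eq_square)
  hence "(d^2*r^2) mod n = (((d*r) mod n) * ((d*r) mod n)) mod n"
    by (simp only: mod_mult_eq)
  moreover have "(d*r) mod n < n" using npos by simp
  ultimately have "(d^2*r^2) mod n \<in> sq_set n" unfolding sq_set_def by blast
  moreover have "(d^2*r^2) mod n \<noteq> 0"
  proof
    assume "(d^2*r^2) mod n = 0"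
    hence "n dvd d^2*r^2" by (simp add: dvd_eq_mod_eq_0)
    hence "d^2*625 dvd d^2*r^2" using n by (simp only: mult.commute)
    hence "625 dvd r^2" using d by simp
    thus False using r by simp
  qed
  ultimately show ?thesis unfolding sq_set_star_def by simp
qed

lemma block:
  fixes n d u i j :: nat and y :: "nat \<Rightarrow> nat"
  assumes n: "n = 625*d^2" and d: "0<d" and ij: "i<j" and u: "\<not> 625 dvd u^2"
    and c: "625 dvd y i + u^2*y j + 25*(\<Sum>k\<in>{i<..<j}. y k)"
  shows "weighted_zero_sum n (sq_set_star n) y {i..<Suc j}"
proof -
  define r where "r k = (if k=i then 1 else if k=j then u else 5)" for k :: nat
  define a where "a k = (d^2*(r k)^2) mod n" for k
  have mem: "\<forall>k\<in>{i..<Suc j}. a k \<in> sq_set_star n"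
  proof
    fix k
    have "\<not> 625 dvd (r k)^2" using u by (simp add: r_def)
    thus "a k \<in> sq_set_star n" unfolding a_def using sq_mem[OF n d] by blast
  qed
  have s1: "(\<Sum>k\<in>{i..<Suc j}. a k * y k) mod n = (\<Sum>k\<in>{i..<Suc j}. (a k * y k) mod n) mod n"
    by (rule mod_sum_eq[symmetric])
  also have "\<dots> = (\<Sum>k\<in>{i..<Suc j}. (d^2*(r k)^2 * y k) mod n) mod n"
    unfolding a_def by (simp add: mod_mult_left_eq)
  also have "\<dots> = (\<Sum>k\<in>{i..<Suc j}. d^2*(r k)^2 * y k) mod n"
    by (rule mod_sum_eq)
  finally have s2: "(\<Sum>k\<in>{i..<Suc j}. a k * y k) mod n = (\<Sum>k\<in>{i..<Suc j}. d^2*(r k)^2 * y k) mod n" .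
  have split: "{i..<Suc j} = insert i (insert j {i<..<j})" using ij by auto
  have inner: "(\<Sum>k\<in>{i<..<j}. d^2*(r k)^2 * y k) = d^2 * (25 * (\<Sum>k\<in>{i<..<j}. y k))"
  proof -
    have "(\<Sum>k\<in>{i<..<j}. d^2*(r k)^2 * y k) = (\<Sum>k\<in>{i<..<j}. d^2 * (25 * y k))"
      by (rule sum.cong) (auto simp: r_def)
    also have "\<dots> = d^2 * (25 * (\<Sum>k\<in>{i<..<j}. y k))" by (simp add: sum_distrib_left)
    finally show ?thesis .
  qed
  have "(\<Sum>k\<in>{i..<Suc j}. d^2*(r k)^2 * y k) = d^2*(r i)^2*y i + (d^2*(r j)^2*y j + (\<Sum>k\<in>{i<..<j}. d^2*(r k)^2 * y k))"
    unfolding split using ij by (simp add: sum.insert)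
  also have "\<dots> = d^2 * (y i + u^2*y j + 25*(\<Sum>k\<in>{i<..<j}. y k))"
  proof -
    have ri: "r i = 1" and rj: "r j = u" using ij by (auto simp: r_def)
    show ?thesis unfolding inner ri rj by (simp add: distrib_left mult.assoc)
  qed
  finally have s3: "(\<Sum>k\<in>{i..<Suc j}. d^2*(r k)^2 * y k) = d^2 * (y i + u^2*y j + 25*(\<Sum>k\<in>{i<..<j}. y k))" .
  obtain e where e: "y i + u^2*y j + 25*(\<Sum>k\<in>{i<..<j}. y k) = 625*e" using c by blast
  have "(\<Sum>k\<in>{i..<Suc j}. a k * y k) mod n = (d^2 * (625*e)) mod n"
    using s2 s3 e by simp
  also have "\<dots> = 0" using n by simp
  finally have "(\<Sum>k\<in>{i..<Suc j}. a k * y k) mod n = 0" .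
  with mem have "(\<forall>k\<in>{i..<Suc j}. a k \<in> sq_set_star n) \<and> (\<Sum>k\<in>{i..<Suc j}. a k * y k) mod n = 0" by (rule conjI)
  thus ?thesis unfolding weighted_zero_sum_def by (rule exI[of _ a])
qed

lemma block1:
  fixes n d i :: nat and y :: "nat \<Rightarrow> nat"
  assumes n: "n = 625*d^2" and d: "0<d" and c: "25 dvd y i"
  shows "weighted_zero_sum n (sq_set_star n) y {i..<Suc i}"
proof -
  define a where "a k = (d^2*5^2) mod n" for k :: nat
  have mem: "\<forall>k\<in>{i..<Suc i}. a k \<in> sq_set_star n"
    unfolding a_def using sq_mem[OF n d, of 5] by simp
  obtain e where e: "y i = 25*e" using c by blast
  have "(\<Sum>k\<in>{i..<Suc i}. a k * y k) mod n = (a i * y i) mod n" by simp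
  also have "\<dots> = (d^2*5^2 * y i) mod n" unfolding a_def by (simp add: mod_mult_left_eq)
  also have "\<dots> = 0" unfolding e n by simp
  finally have "(\<Sum>k\<in>{i..<Suc i}. a k * y k) mod n = 0" .
  with mem have "(\<forall>k\<in>{i..<Suc i}. a k \<in> sq_set_star n) \<and> (\<Sum>k\<in>{i..<Suc i}. a k * y k) mod n = 0" by (rule conjI)
  thus ?thesis unfolding weighted_zero_sum_def by (rule exI[of _ a])
qed

definition key :: "nat \<Rightarrow> nat" where
  "key y = (if 25 dvd y then 0 else if 5 dvd y then 10 + (y div 5)^2 mod 5 else y^2 mod 5)"

lemma sqmod5:
  fixes x :: nat
  assumes "\<not> 5 dvd x"
  shows "x^2 mod 5 \<in> {1,4}"
proof -
  have "x^2 mod 5 = (x mod 5)^2 mod 5" by (simp add: power_mod)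
  moreover have "x mod 5 = 1 \<or> x mod 5 = 2 \<or> x mod 5 = 3 \<or> x mod 5 = 4" using assms by presburger
  ultimately show ?thesis by auto
qed

lemma div5_nd:
  fixes y :: nat
  assumes "5 dvd y" "\<not> 25 dvd y"
  shows "\<not> 5 dvd y div 5"
proof
  assume "5 dvd y div 5"
  then obtain t where "y div 5 = 5*t" by blast
  moreover have "y = 5*(y div 5)" using assms(1) by simp
  ultimately have "y = 25*t" by simp
  thus False using assms(2) by simp
qed

lemma key_range:
  fixes y :: nat
  assumes "\<not> 25 dvd y"
  shows "key y \<in> {1,4,11,14}"
proof (cases "5 dvd y")
  case True
  hence "(y div 5)^2 mod 5 \<in> {1,4}" using sqmod5 div5_nd assms by blast
  thus ?thesis using True assms by (auto simp: key_def)
next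
  case False
  thus ?thesis using sqmod5[OF False] assms by (auto simp: key_def)
qed

lemma int_sq_nat:
  fixes u :: int
  shows "int ((nat \<bar>u\<bar>)^2) = u^2"
  by simp

lemma nat_sol:
  fixes x z S :: nat and u :: int
  assumes "(625::int) dvd int x + u^2 * int z + 25 * int S" "\<not> (625::int) dvd u^2"
  shows "\<exists>v::nat. 625 dvd x + v^2 * z + 25*S \<and> \<not> 625 dvd v^2"
proof -
  define v where "v = nat \<bar>u\<bar>"
  have iv: "int (v^2) = u^2" unfolding v_def by simp
  have "int (x + v^2 * z + 25*S) = int x + u^2 * int z + 25 * int S"
    using iv by (simp add: of_nat_mult[symmetric])
  hence "625 dvd x + v^2 * z + 25*S" using assms(1)
    by (metis int_dvd_int_iff of_nat_numeral)
  moreover have "\<not> 625 dvd v^2" using assms(2) iv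
    by (metis int_dvd_int_iff of_nat_numeral)
  ultimately show ?thesis by blast
qed

theorem mainTheorem19:
  fixes n :: nat
  assumes "0 < n" and "\<exists>m. n = m ^ 2" and "(5::nat) ^ 4 dvd n"
  shows "C_const (sq_set_star n) n \<le> 7"
proof -
  obtain m where m: "n = m^2" using assms(2) by blast
  have p5: "prime (5::nat)" by simp
  have "5 dvd m^2" using assms(3) m by (metis dvd_trans dvd_power zero_less_numeral)
  hence "5 dvd m" using p5 prime_dvd_power by blast
  then obtain a where a: "m = 5*a" by blast
  have "25*25 dvd 25*a^2" using assms(3) m a by (simp add: power_mult_distrib)
  hence "25 dvd a^2" by simp
  hence "5 dvd a^2" by (rule dvd_trans[rotated]) simp
  hence "5 dvd a" using p5 prime_dvd_power by blast
  then obtain d where dd: "a = 5*d" by blast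
  have n: "n = 625*d^2" using m a dd by (simp add: power_mult_distrib)
  have d: "0 < d" using n assms(1) by (cases d) auto
  have CP: "C_property n (sq_set_star n) 7"
    unfolding C_property_def
  proof (intro allI impI)
    fix y :: "nat \<Rightarrow> nat"
    show "\<exists>i j. i < j \<and> j \<le> 7 \<and> weighted_zero_sum n (sq_set_star n) y {i..<j}"
    proof (cases "\<exists>i<5. 25 dvd y i")
      case True
      then obtain i where "i<5" "25 dvd y i" by blast
      thus ?thesis using block1[OF n d] by (intro exI[of _ i] exI[of _ "Suc i"]) auto
    next
      case False
      have sub: "(key \<circ> y) ` {0..<5} \<subseteq> {1,4,11,14}"
      proof (rule image_subsetI)
        fix k :: nat assume "k \<in> {0..<5}"
        hence "\<not> 25 dvd y k" using False by auto
        thus "(key \<circ> y) k \<in> {1,4,11,14}" using key_range[of "y k"] by simp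
      qed
      have "\<not> inj_on (key \<circ> y) {0..<5}"
      proof
        assume "inj_on (key \<circ> y) {0..<5}"
        hence "card ((key \<circ> y) ` {0..<5}) = card {0..<5::nat}" by (rule card_image)
        hence "card ((key \<circ> y) ` {0..<5}) = 5" by simp
        moreover have "card ((key \<circ> y) ` {0..<5}) \<le> card {1::nat,4,11,14}"
          using sub by (intro card_mono) auto
        ultimately show False by simp
      qed
      then obtain i0 j0 where ij0: "i0 < 5" "j0 < 5" "i0 \<noteq> j0" "key (y i0) = key (y j0)"
        unfolding inj_on_def by auto
      obtain i j where ij: "i < j" "j < 5" "key (y i) = key (y j)"
      proof (cases "i0 < j0")
        case True thus ?thesis using that ij0 by blast
      next
        case False thus ?thesis using that[of j0 i0] ij0 by auto
      qed
      have ni: "\<not> 25 dvd y i" "\<not> 25 dvd y j" using False ij by auto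
      define S where "S = (\<Sum>k\<in>{i<..<j}. y k)"
      have main: "625 dvd y i + v^2*y j + 25*S \<and> \<not> 625 dvd v^2 \<Longrightarrow> ?thesis" for v
        using block[OF n d ij(1), of v y] ij unfolding S_def
        by (intro exI[of _ i] exI[of _ "Suc j"]) auto
      show ?thesis
      proof (cases "5 dvd y i")
        case False
        have ki: "key (y i) = (y i)^2 mod 5" using False ni by (simp add: key_def)
        have nj: "\<not> 5 dvd y j"
        proof
          assume "5 dvd y j"
          hence "key (y j) \<ge> 10" using ni by (simp add: key_def)
          moreover have "key (y i) < 5" using ki by simp
          ultimately show False using ij by simp
        qed
        have kj: "key (y j) = (y j)^2 mod 5" using nj ni by (simp add: key_def)
        have "[(y i)^2 = (y j)^2] (mod 5)" using ij ki kj by (simp add: cong_def)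
        hence "[int ((y i)^2) = int ((y j)^2)] (mod int 5)" by (simp only: cong_int_iff)
        hence "5 dvd (int (y i))^2 - (int (y j))^2" by (simp add: cong_iff_dvd_diff)
        moreover have "\<not> 5 dvd int (y j)" using nj by presburger
        ultimately obtain u where "(625::int) dvd int (y i) + u^2 * int (y j) + 5 * (5 * int S)"
            "\<not> (625::int) dvd u^2" using L1 by blast
        hence "(625::int) dvd int (y i) + u^2 * int (y j) + 25 * int S" "\<not> (625::int) dvd u^2" by simp_all
        then obtain v where "625 dvd y i + v^2*y j + 25*S \<and> \<not> 625 dvd v^2" using nat_sol by blast
        thus ?thesis by (rule main)
      next
        case True
        have ti: "\<not> 5 dvd y i div 5" using div5_nd True ni by blast
        have ki: "key (y i) = 10 + (y i div 5)^2 mod 5" using True ni by (simp add: key_def)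
        have nj: "5 dvd y j"
        proof (rule ccontr)
          assume "\<not> 5 dvd y j"
          hence "key (y j) < 5" using ni by (simp add: key_def)
          thus False using ij ki by simp
        qed
        have tj: "\<not> 5 dvd y j div 5" using div5_nd nj ni by blast
        have kj: "key (y j) = 10 + (y j div 5)^2 mod 5" using nj ni by (simp add: key_def)
        have "[(y i div 5)^2 = (y j div 5)^2] (mod 5)" using ij ki kj by (simp add: cong_def)
        hence "[int ((y i div 5)^2) = int ((y j div 5)^2)] (mod int 5)" by (simp only: cong_int_iff)
        hence "5 dvd (int (y i div 5))^2 - (int (y j div 5))^2" by (simp add: cong_iff_dvd_diff)
        moreover have "\<not> 5 dvd int (y j div 5)" using tj by presburger
        ultimately obtain u where u: "(625::int) dvd int (y i div 5) + u^2 * int (y j div 5) + 5 * int S"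
            "\<not> (625::int) dvd u^2" using L1 by blast
        have "int (y i) = 5 * int (y i div 5)" "int (y j) = 5 * int (y j div 5)"
          using True nj by auto
        hence hq: "int (y i) + u^2 * int (y j) + 25 * int S = 5 * (int (y i div 5) + u^2 * int (y j div 5) + 5 * int S)"
          by (simp add: algebra_simps)
        have "(625::int) dvd int (y i) + u^2 * int (y j) + 25 * int S"
          unfolding hq by (rule dvd_mult[OF u(1)])
        then obtain v where "625 dvd y i + v^2*y j + 25*S \<and> \<not> 625 dvd v^2" using nat_sol u(2) by blast
        thus ?thesis by (rule main)
      qed
    qed
  qed
  show ?thesis unfolding C_const_def by (rule Least_le) (use CP in simp)
qed

end
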